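(* Let $\Sigma$ be a finite alphabet with $|\Sigma|\ge 2$, let $m,n$ be positive integers with $m\ge 2$, and let $\rho_1,\rho_2,\rho_3>0$ with $\rho_1+\rho_2+\rho_3\le 1$. The Markov chains with transition matrices $S^{\mathfrak{N}(n)}_{\rho_1,\rho_2,\rho_3}$, $S^{\mathfrak{N}_m(n)}_{\rho_1,\rho_2,\rho_3}$ and $S^{\mathfrak{N}'_m(n)}_{\rho_1,\rho_2,\rho_3}$ are ergodic (irreducible and aperiodic), and their stationary distributions are the uniform distributions on $\mathfrak{N}(n)$, $\mathfrak{N}_m(n)$ and $\mathfrak{N}'_m(n)$ respectively.
   Context: A non-deterministic automaton (NFA) over $\Sigma$ is a tuple $(Q,\Sigma,\Delta,I,F)$ with $Q$ a finite set of states, $\Delta\subseteq Q\times\Sigma\times Q$ the transitions, $I\subseteq Q$ the initial states and $F\subseteq Q$ the final states. The NFA is trim if every state is reachable by a path of transitions from an initial state and from every state some final state is reachable by a path of transitions. $\mathfrak{N}(n)$ is the set of trim NFAs over $\Sigma$ with state set $Q=\{1,\dots,n\}$. $\mathfrak{N}_m(n)$ is the set of automata in $\mathfrak{N}(n)$ such that for each state $p$ there are at most $m$ pairs $(a,q)$ with $(p,a,q)\in\Delta$. $\mathfrak{N}'_m(n)$ is the set of automata in $\mathfrak{N}(n)$ such that for each state $p$ and each letter $a$ there are at most $m$ states $q$ with $(p,a,q)\in\Delta$. For an automaton $\mathcal{A}=(Q,\Sigma,\Delta,I,F)$: $\mathsf{Ch_{init}}(\mathcal{A},q)$ is $\mathcal{A}$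 with $q$ removed from $I$ if $q\in I$ and added to $I$ otherwise; $\mathsf{Ch_{final}}(\mathcal{A},q)$ is defined similarly with $F$; $\mathsf{Ch_{trans}}(\mathcal{A},(p,a,q))$ is $\mathcal{A}$ with $(p,a,q)$ removed from $\Delta$ if present and added otherwise. For a class $\mathfrak{X}$ of automata with state set $Q=\{1,\dots,n\}$, the matrix $S^{\mathfrak{X}}_{\rho_1,\rho_2,\rho_3}$ on $\mathfrak{X}\times\mathfrak{X}$ is: for $x\ne y$, $S(x,y)=\rho_1/n$ if $y=\mathsf{Ch_{init}}(x,q)$ for some $q$; $S(x,y)=\rho_2/n$ if $y=\mathsf{Ch_{final}}(x,q)$ for some $q$; $S(x,y)=\rho_3/(|\Sigma|n^2)$ if $y=\mathsf{Ch_{trans}}(x,(p,a,q))$ for some $(p,a,q)\in Q\times\Sigma\times Q$; $S(x,y)=0$ otherwise; and $S(x,x)=1-\sum_{y\ne x}S(x,y)$. *)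

theory Defs
  imports Complex_Main
begin

record 'a nfa =
  init :: "nat set"
  final :: "nat set"
  trans :: "(nat \<times> 'a \<times> nat) set"

definition edges :: "'a nfa \<Rightarrow> (nat \<times> nat) set" where
  "edges A = {(p, q). \<exists>a. (p, a, q) \<in> trans A}"

definition trim_nfa :: "'a set \<Rightarrow> nat \<Rightarrow> 'a nfa \<Rightarrow> bool" where
  "trim_nfa \<Sigma> n A \<longleftrightarrow>
     init A \<subseteq> {1..n} \<and> final A \<subseteq> {1..n} \<and> trans A \<subseteq> {1..n} \<times> \<Sigma> \<times> {1..n} \<and>
     (\<forall>q\<in>{1..n}. (\<exists>i\<in>init A. (i, q) \<in> (edges A)\<^sup>*) \<and> (\<exists>f\<in>final A. (q, f) \<in> (edges A)\<^sup>*))"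

definition NFAs :: "'a set \<Rightarrow> nat \<Rightarrow> 'a nfa set" where
  "NFAs \<Sigma> n = {A. trim_nfa \<Sigma> n A}"

definition NFAs_m :: "'a set \<Rightarrow> nat \<Rightarrow> nat \<Rightarrow> 'a nfa set" where
  "NFAs_m \<Sigma> m n = {A \<in> NFAs \<Sigma> n.
      \<forall>p\<in>{1..n}. card {(a, q). (p, a, q) \<in> trans A} \<le> m}"

definition NFAs'_m :: "'a set \<Rightarrow> nat \<Rightarrow> nat \<Rightarrow> 'a nfa set" where
  "NFAs'_m \<Sigma> m n = {A \<in> NFAs \<Sigma> n.
      \<forall>p\<in>{1..n}. \<forall>a\<in>\<Sigma>. card {q. (p, a, q) \<in> trans A} \<le> m}"

definition ch_init :: "'a nfa \<Rightarrow> nat \<Rightarrow> 'a nfa" where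
  "ch_init A q = A\<lparr>init := (if q \<in> init A then init A - {q} else insert q (init A))\<rparr>"

definition ch_final :: "'a nfa \<Rightarrow> nat \<Rightarrow> 'a nfa" where
  "ch_final A q = A\<lparr>final := (if q \<in> final A then final A - {q} else insert q (final A))\<rparr>"

definition ch_trans :: "'a nfa \<Rightarrow> nat \<times> 'a \<times> nat \<Rightarrow> 'a nfa" where
  "ch_trans A t = A\<lparr>trans := (if t \<in> trans A then trans A - {t} else insert t (trans A))\<rparr>"

definition S_off :: "'a set \<Rightarrow> nat \<Rightarrow> real \<Rightarrow> real \<Rightarrow> real \<Rightarrow> 'a nfa \<Rightarrow> 'a nfa \<Rightarrow> real" where
  "S_off \<Sigma> n \<rho>1 \<rho>2 \<rho>3 x y =
     (if \<exists>q\<in>{1..n}. y = ch_init x q then \<rho>1 / real n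
      else if \<exists>q\<in>{1..n}. y = ch_final x q then \<rho>2 / real n
      else if \<exists>t\<in>{1..n} \<times> \<Sigma> \<times> {1..n}. y = ch_trans x t
        then \<rho>3 / (real (card \<Sigma>) * real n ^ 2)
      else 0)"

definition S_mat :: "'a set \<Rightarrow> nat \<Rightarrow> real \<Rightarrow> real \<Rightarrow> real \<Rightarrow> 'a nfa set \<Rightarrow> 'a nfa \<Rightarrow> 'a nfa \<Rightarrow> real" where
  "S_mat \<Sigma> n \<rho>1 \<rho>2 \<rho>3 X x y =
     (if x = y then 1 - (\<Sum>z\<in>X - {x}. S_off \<Sigma> n \<rho>1 \<rho>2 \<rho>3 x z)
      else S_off \<Sigma> n \<rho>1 \<rho>2 \<rho>3 x y)"

fun mat_pow :: "'s set \<Rightarrow> ('s \<Rightarrow> 's \<Rightarrow> real) \<Rightarrow> nat \<Rightarrow> 's \<Rightarrow> 's \<Rightarrow> real" where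
  "mat_pow X P 0 x y = (if x = y then 1 else 0)"
| "mat_pow X P (Suc k) x y = (\<Sum>z\<in>X. mat_pow X P k x z * P z y)"

definition irreducible_chain :: "'s set \<Rightarrow> ('s \<Rightarrow> 's \<Rightarrow> real) \<Rightarrow> bool" where
  "irreducible_chain X P \<longleftrightarrow> (\<forall>x\<in>X. \<forall>y\<in>X. \<exists>k. mat_pow X P k x y > 0)"

definition period :: "'s set \<Rightarrow> ('s \<Rightarrow> 's \<Rightarrow> real) \<Rightarrow> 's \<Rightarrow> nat" where
  "period X P x = Gcd {k. k \<ge> 1 \<and> mat_pow X P k x x > 0}"

definition aperiodic_chain :: "'s set \<Rightarrow> ('s \<Rightarrow> 's \<Rightarrow> real) \<Rightarrow> bool" where
  "aperiodic_chain X P \<longleftrightarrow> (\<forall>x\<in>X. period X P x = 1)"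

definition ergodic_chain :: "'s set \<Rightarrow> ('s \<Rightarrow> 's \<Rightarrow> real) \<Rightarrow> bool" where
  "ergodic_chain X P \<longleftrightarrow> irreducible_chain X P \<and> aperiodic_chain X P"

definition stationary_dist :: "'s set \<Rightarrow> ('s \<Rightarrow> 's \<Rightarrow> real) \<Rightarrow> ('s \<Rightarrow> real) \<Rightarrow> bool" where
  "stationary_dist X P \<pi> \<longleftrightarrow> (\<forall>x\<in>X. \<pi> x \<ge> 0) \<and> (\<Sum>x\<in>X. \<pi> x) = 1 \<and>
     (\<forall>y\<in>X. (\<Sum>x\<in>X. \<pi> x * P x y) = \<pi> y)"

definition ergodic_uniform :: "'s set \<Rightarrow> ('s \<Rightarrow> 's \<Rightarrow> real) \<Rightarrow> bool" where
  "ergodic_uniform X P \<longleftrightarrow> ergodic_chain X P \<and>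
     (\<forall>\<pi>. stationary_dist X P \<pi> \<longleftrightarrow> (\<forall>x\<in>X. \<pi> x = 1 / real (card X)))"

end

theory Submission
  imports Defs
begin


definition posrel :: "'s set \<Rightarrow> ('s \<Rightarrow> 's \<Rightarrow> real) \<Rightarrow> ('s \<times> 's) set" where
  "posrel X P = {(x,y). x \<in> X \<and> y \<in> X \<and> P x y > 0}"

lemma relpow_sym:
  assumes "\<And>x y. (x,y) \<in> R \<Longrightarrow> (y,x) \<in> R"
  shows "(x,y) \<in> R ^^ k \<Longrightarrow> (y,x) \<in> R ^^ k"
proof (induction k arbitrary: x y)
  case 0 then show ?case by simp
next
  case (Suc k)
  then obtain w where "(x,w) \<in> R ^^ k" "(w,y) \<in> R" by auto
  then have "(w,x) \<in> R ^^ k" "(y,w) \<in> R" using Suc.IH assms by auto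
  then have "(y,x) \<in> R O R ^^ k" by auto
  then show ?case by (simp add: relpow_commute)
qed

lemma mat_pow_nonneg:
  assumes "finite X" "\<forall>x\<in>X. \<forall>y\<in>X. 0 \<le> P x y"
  shows "y \<in> X \<Longrightarrow> 0 \<le> mat_pow X P k x y"
proof (induction k arbitrary: y)
  case 0 then show ?case by simp
next
  case (Suc k) then show ?case using assms
    by (auto intro!: sum_nonneg mult_nonneg_nonneg)
qed

lemma relpow_pos:
  assumes "finite X" "\<forall>x\<in>X. \<forall>y\<in>X. 0 \<le> P x y"
  shows "(x,y) \<in> (posrel X P) ^^ k \<Longrightarrow> mat_pow X P k x y > 0"
proof (induction k arbitrary: y)
  case 0 then show ?case by simp
next
  case (Suc k)
  then obtain w where w: "(x,w) \<in> (posrel X P) ^^ k" "(w,y) \<in> posrel X P" by auto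
  then have wX: "w \<in> X" "y \<in> X" and Pw: "P w y > 0" by (auto simp: posrel_def)
  have "0 < mat_pow X P k x w * P w y" using Suc.IH[OF w(1)] Pw by simp
  also have "\<dots> \<le> (\<Sum>z\<in>X. mat_pow X P k x z * P z y)"
    by (rule member_le_sum[OF wX(1)]) (use assms mat_pow_nonneg wX in \<open>auto intro!: mult_nonneg_nonneg\<close>)
  finally show ?case by simp
qed

lemma generic_ergodic:
  assumes fin: "finite X" and CX: "C \<in> X"
    and nonneg: "\<forall>x\<in>X. \<forall>y\<in>X. 0 \<le> P x y"
    and sym: "\<forall>x\<in>X. \<forall>y\<in>X. P x y = P y x"
    and rows: "\<forall>x\<in>X. (\<Sum>y\<in>X. P x y) = 1"
    and loop: "P C C > 0"
    and conn: "\<forall>x\<in>X. (x, C) \<in> (posrel X P)\<^sup>*"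
  shows "ergodic_uniform X P"
proof -
  let ?R = "posrel X P"
  have symR: "(y,x) \<in> ?R" if "(x,y) \<in> ?R" for x y
    using that sym by (auto simp: posrel_def)
  have conv: "?R\<inverse> = ?R" using symR by auto
  have conn2: "(x,y) \<in> ?R\<^sup>*" if "x \<in> X" "y \<in> X" for x y
  proof -
    have "(C,y) \<in> (?R\<inverse>)\<^sup>*" using conn that by (simp add: rtrancl_converseI)
    then have "(C,y) \<in> ?R\<^sup>*" using conv by simp
    then show ?thesis using conn that by (meson rtrancl_trans)
  qed
  have irr: "irreducible_chain X P"
    unfolding irreducible_chain_def
    using conn2 relpow_pos[OF fin nonneg] by (meson rtrancl_power)
  have aper: "aperiodic_chain X P"
    unfolding aperiodic_chain_def period_def
  proof
    fix x assume xX: "x \<in> X"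
    obtain k where k: "(x,C) \<in> ?R ^^ k" using conn xX by (meson rtrancl_power)
    have k': "(C,x) \<in> ?R ^^ k" using relpow_sym[of ?R, OF symR k] .
    have CC: "(C,C) \<in> ?R" using CX loop by (simp add: posrel_def)
    have a: "(x,x) \<in> ?R ^^ (k + 1 + k)" unfolding relpow_add relpow_1 using k k' CC by blast
    have b: "(x,x) \<in> ?R ^^ (k + 1 + 1 + k)" unfolding relpow_add relpow_1 using k k' CC by blast
    let ?S = "{k. k \<ge> 1 \<and> mat_pow X P k x x > 0}"
    have "k + 1 + k \<in> ?S" "k + 1 + 1 + k \<in> ?S"
      using relpow_pos[OF fin nonneg a] relpow_pos[OF fin nonneg b] by auto
    then have "Gcd ?S dvd (k+1+k)" "Gcd ?S dvd (Suc (k+1+k))" by (auto intro: Gcd_dvd)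
    then have "Gcd ?S dvd (Suc (k+1+k) - (k+1+k))" by (intro dvd_diff_nat)
    then have "Gcd ?S dvd 1" by simp
    then show "Gcd ?S = 1" by simp
  qed
  have ne: "X \<noteq> {}" using CX by auto
  have cpos: "card X > 0" using fin ne by (simp add: card_gt_0_iff)
  have colsum: "(\<Sum>x\<in>X. P x y) = 1" if "y \<in> X" for y
    proof -
    have "(\<Sum>x\<in>X. P x y) = (\<Sum>x\<in>X. P y x)" using sym that by (intro sum.cong) auto
    then show ?thesis using rows that by simp
  qed
  have stat: "stationary_dist X P \<pi> \<longleftrightarrow> (\<forall>x\<in>X. \<pi> x = 1 / real (card X))" for \<pi>
  proof
    assume st: "stationary_dist X P \<pi>"
    then have pnn: "\<forall>x\<in>X. 0 \<le> \<pi> x" and ps: "(\<Sum>x\<in>X. \<pi> x) = 1"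
      and eq: "\<forall>y\<in>X. (\<Sum>x\<in>X. \<pi> x * P x y) = \<pi> y"
      by (auto simp: stationary_dist_def)
    define M where "M = Max (\<pi> ` X)"
    have leM: "\<pi> x \<le> M" if "x \<in> X" for x using fin that by (simp add: M_def)
    have "M \<in> \<pi> ` X" unfolding M_def using fin ne by (intro Max_in) auto
    then obtain x0 where x0: "x0 \<in> X" "\<pi> x0 = M" by auto
    have stepM: "\<pi> z = M" if "y \<in> X" "\<pi> y = M" "(y,z) \<in> ?R" for y z
    proof -
      have zX: "z \<in> X" and Pz: "P z y > 0" using that sym by (auto simp: posrel_def)
      have "(\<Sum>x\<in>X. (M - \<pi> x) * P x y) = M * (\<Sum>x\<in>X. P x y) - (\<Sum>x\<in>X. \<pi> x * P x y)"
        by (simp add: algebra_simps sum_subtractf sum_distrib_left)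
      also have "\<dots> = 0" using colsum[OF that(1)] eq that by simp
      finally have s0: "(\<Sum>x\<in>X. (M - \<pi> x) * P x y) = 0" .
      have "\<forall>x\<in>X. (M - \<pi> x) * P x y = 0"
        using sum_nonneg_eq_0_iff[OF fin, of "\<lambda>x. (M - \<pi> x) * P x y"] s0 leM nonneg that(1)
        by auto
      then have "(M - \<pi> z) * P z y = 0" using zX by auto
      then show ?thesis using Pz by simp
    qed
    have allM: "\<pi> z = M" if "z \<in> X" for z
    proof -
      have "(x0, z) \<in> ?R\<^sup>*" using conn2 x0 that by auto
      then show ?thesis
      proof (induction rule: rtrancl_induct)
        case base then show ?case using x0 by simp
      next
        case (step y z) then show ?case using stepM[of y z]
          by (auto simp: posrel_def)
      qed
    qed
    have "(\<Sum>x\<in>X. \<pi> x) = real (card X) * M" using allM by simp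
    then have "M = 1 / real (card X)" using ps cpos by (simp add: field_simps)
    then show "\<forall>x\<in>X. \<pi> x = 1 / real (card X)" using allM by simp
  next
    assume u: "\<forall>x\<in>X. \<pi> x = 1 / real (card X)"
    have "(\<Sum>x\<in>X. \<pi> x * P x y) = \<pi> y" if "y \<in> X" for y
    proof -
      have "(\<Sum>x\<in>X. \<pi> x * P x y) = (\<Sum>x\<in>X. 1 / real (card X) * P x y)" using u by simp
      also have "\<dots> = 1 / real (card X)" using colsum[OF that] by (simp only: sum_distrib_left[symmetric])
      finally show ?thesis using u that by simp
    qed
    then show "stationary_dist X P \<pi>" using u cpos
      by (simp add: stationary_dist_def)
  qed
  show ?thesis unfolding ergodic_uniform_def ergodic_chain_def using irr aper stat by blast
qed



definition XQ :: "'a set \<Rightarrow> nat \<Rightarrow> ((nat \<times> 'a \<times> nat) set \<Rightarrow> bool) \<Rightarrow> 'a nfa set" where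
  "XQ \<Sigma> n Q = {A \<in> NFAs \<Sigma> n. Q (trans A)}"

lemma ch_init_inv[simp]: "ch_init (ch_init x q) q = x"
  by (auto simp: ch_init_def insert_absorb)
lemma ch_final_inv[simp]: "ch_final (ch_final x q) q = x"
  by (auto simp: ch_final_def insert_absorb)
lemma ch_trans_inv[simp]: "ch_trans (ch_trans x q) q = x"
  by (auto simp: ch_trans_def insert_absorb)

lemma ch_init_ne: "ch_init x q \<noteq> x"
proof
  assume "ch_init x q = x"
  then have "init (ch_init x q) = init x" by simp
  then show False by (auto simp: ch_init_def split: if_splits)
qed
lemma ch_final_ne: "ch_final x q \<noteq> x"
proof
  assume "ch_final x q = x"
  then have "final (ch_final x q) = final x" by simp
  then show False by (auto simp: ch_final_def split: if_splits)
qed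
lemma ch_trans_ne: "ch_trans x q \<noteq> x"
proof
  assume "ch_trans x q = x"
  then have "trans (ch_trans x q) = trans x" by simp
  then show False by (auto simp: ch_trans_def split: if_splits)
qed

lemma ex_init_sym: "(\<exists>q\<in>Q. y = ch_init x q) \<longleftrightarrow> (\<exists>q\<in>Q. x = ch_init y q)" by (metis ch_init_inv)
lemma ex_final_sym: "(\<exists>q\<in>Q. y = ch_final x q) \<longleftrightarrow> (\<exists>q\<in>Q. x = ch_final y q)" by (metis ch_final_inv)
lemma ex_trans_sym: "(\<exists>q\<in>Q. y = ch_trans x q) \<longleftrightarrow> (\<exists>q\<in>Q. x = ch_trans y q)" by (metis ch_trans_inv)

lemma S_off_sym: "S_off \<Sigma> n r1 r2 r3 x y = S_off \<Sigma> n r1 r2 r3 y x"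
  unfolding S_off_def
  by (simp only: ex_init_sym[of _ y x] ex_final_sym[of _ y x] ex_trans_sym[of _ y x])

lemma S_off_nonneg: "r1 \<ge> 0 \<Longrightarrow> r2 \<ge> 0 \<Longrightarrow> r3 \<ge> 0 \<Longrightarrow> S_off \<Sigma> n r1 r2 r3 x y \<ge> 0"
  unfolding S_off_def by auto

lemma S_off_pos:
  assumes "r1 > 0" "r2 > 0" "r3 > 0" "n \<ge> 1" "card \<Sigma> > 0"
    and "(\<exists>q\<in>{1..n}. y = ch_init x q) \<or> (\<exists>q\<in>{1..n}. y = ch_final x q)
         \<or> (\<exists>t\<in>{1..n} \<times> \<Sigma> \<times> {1..n}. y = ch_trans x t)"
  shows "S_off \<Sigma> n r1 r2 r3 x y > 0"
  using assms unfolding S_off_def by auto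

lemma sum_if_const:
  "finite A \<Longrightarrow> (\<Sum>z\<in>A. if z \<in> N then c else 0) = (c::real) * real (card (A \<inter> N))"
  by (simp add: sum.inter_restrict[symmetric])

lemma off_sum_le:
  assumes fS: "finite \<Sigma>" and cS: "card \<Sigma> > 0" and n: "n \<ge> 1"
    and r: "r1 > 0" "r2 > 0" "r3 > 0" and fX: "finite X"
  shows "(\<Sum>z\<in>X-{x}. S_off \<Sigma> n r1 r2 r3 x z)
     \<le> r1 / real n * real (card ((X-{x}) \<inter> ch_init x ` {1..n})) + r2 + r3"
proof -
  define Ni where "Ni = ch_init x ` {1..n}"
  define Nf where "Nf = ch_final x ` {1..n}"
  define Nt where "Nt = ch_trans x ` ({1..n} \<times> \<Sigma> \<times> {1..n})"
  define c3 where "c3 = r3 / (real (card \<Sigma>) * real n ^ 2)"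
  define A where "A = X - {x}"
  have fA: "finite A" using fX by (simp add: A_def)
  have c3: "c3 \<ge> 0" using r by (simp add: c3_def)
  have le: "S_off \<Sigma> n r1 r2 r3 x z \<le> (if z \<in> Ni then r1/n else 0) + (if z \<in> Nf then r2/n else 0)
      + (if z \<in> Nt then c3 else 0)" for z
    unfolding S_off_def Ni_def Nf_def Nt_def c3_def using r c3[unfolded c3_def]
    by (auto simp: image_iff)
  have "(\<Sum>z\<in>A. S_off \<Sigma> n r1 r2 r3 x z) \<le> (\<Sum>z\<in>A. (if z \<in> Ni then r1/n else 0) + (if z \<in> Nf then r2/n else 0)
      + (if z \<in> Nt then c3 else 0))"
    by (rule sum_mono) (rule le)
  also have "\<dots> = r1/n * card (A \<inter> Ni) + r2/n * card (A \<inter> Nf) + c3 * card (A \<inter> Nt)"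
    by (simp only: sum.distrib sum_if_const[OF fA])
  also have "r2/n * card (A \<inter> Nf) \<le> r2"
  proof -
    have "card (A \<inter> Nf) \<le> card Nf" by (rule card_mono) (auto simp: Nf_def)
    also have "\<dots> \<le> n" unfolding Nf_def using card_image_le[of "{1..n}" "ch_final x"] by simp
    finally have "real (card (A \<inter> Nf)) \<le> real n" by simp
    then have "r2/n * card (A \<inter> Nf) \<le> r2/n * n" using r by (intro mult_left_mono) auto
    then show ?thesis using n by simp
  qed
  also have "c3 * card (A \<inter> Nt) \<le> r3"
  proof -
    have "card (A \<inter> Nt) \<le> card Nt" by (rule card_mono) (auto simp: Nt_def fS)
    also have "\<dots> \<le> card ({1..n} \<times> \<Sigma> \<times> {1..n})" unfolding Nt_def by (rule card_image_le) (simp add: fS)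
    also have "\<dots> = n * (card \<Sigma> * n)" by (simp add: card_cartesian_product)
    finally have "real (card (A \<inter> Nt)) \<le> real n * real (card \<Sigma>) * real n"
      by (simp only: of_nat_mult[symmetric] of_nat_le_iff mult.assoc)
    then have "c3 * card (A \<inter> Nt) \<le> c3 * (real n * real (card \<Sigma>) * real n)" using c3 by (intro mult_left_mono) auto
    also have "\<dots> = r3" using n cS unfolding c3_def by (simp add: power2_eq_square field_simps)
    finally show ?thesis .
  qed
  finally show ?thesis unfolding A_def Ni_def by simp
qed

lemma full_trim:
  assumes "init A = {1..n}" "final A = {1..n}" "trans A \<subseteq> {1..n} \<times> \<Sigma> \<times> {1..n}"
  shows "trim_nfa \<Sigma> n A"
  using assms unfolding trim_nfa_def by auto

lemma mono_trim:
  assumes "trim_nfa \<Sigma> n A" "init A \<subseteq> init B" "init B \<subseteq> {1..n}"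
    "final A \<subseteq> final B" "final B \<subseteq> {1..n}" "trans B = trans A"
  shows "trim_nfa \<Sigma> n B"
proof -
  have e: "edges B = edges A" using assms(6) by (simp add: edges_def)
  show ?thesis using assms unfolding trim_nfa_def e by blast
qed

lemma finite_NFAs:
  assumes "finite \<Sigma>"
  shows "finite (NFAs \<Sigma> n)"
proof -
  let ?F = "\<lambda>(i,f,t). (\<lparr>init = i, final = f, trans = t\<rparr> :: 'a nfa)"
  have "NFAs \<Sigma> n \<subseteq> ?F ` (Pow {1..n} \<times> Pow {1..n} \<times> Pow ({1..n} \<times> \<Sigma> \<times> {1..n}))"
  proof
    fix A assume "A \<in> NFAs \<Sigma> n"
    then have t: "trim_nfa \<Sigma> n A" by (simp add: NFAs_def)
    show "A \<in> ?F ` (Pow {1..n} \<times> Pow {1..n} \<times> Pow ({1..n} \<times> \<Sigma> \<times> {1..n}))"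
    proof (rule image_eqI[where x="(init A, final A, trans A)"])
      show "A = ?F (init A, final A, trans A)" by (cases A) simp
      show "(init A, final A, trans A) \<in> Pow {1..n} \<times> Pow {1..n} \<times> Pow ({1..n} \<times> \<Sigma> \<times> {1..n})"
        using t by (auto simp: trim_nfa_def)
    qed
  qed
  moreover have "finite (?F ` (Pow {1..n} \<times> Pow {1..n} \<times> Pow ({1..n} \<times> \<Sigma> \<times> {1..n})))"
    using assms by (intro finite_imageI) auto
  ultimately show ?thesis by (rule finite_subset)
qed

lemma nfa_ergodic:
  fixes \<Sigma> :: "'a set" and Q :: "(nat \<times> 'a \<times> nat) set \<Rightarrow> bool"
  assumes fS: "finite \<Sigma>" and cS: "card \<Sigma> > 0" and n: "n \<ge> 1"
    and r: "r1 > 0" "r2 > 0" "r3 > 0" and rs: "r1 + r2 + r3 \<le> 1"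
    and Qe: "Q {}"
    and down: "\<forall>T T'. T \<subseteq> {1..n} \<times> \<Sigma> \<times> {1..n} \<longrightarrow> T' \<subseteq> T \<longrightarrow> Q T \<longrightarrow> Q T'"
  shows "ergodic_uniform (XQ \<Sigma> n Q) (S_mat \<Sigma> n r1 r2 r3 (XQ \<Sigma> n Q))"
proof -
  define X where "X = XQ \<Sigma> n Q"
  define P where "P = S_mat \<Sigma> n r1 r2 r3 X"
  define C where "C = (\<lparr>init = {1..n}, final = {1..n}, trans = {}\<rparr> :: 'a nfa)"
  have Xmem: "A \<in> X \<longleftrightarrow> trim_nfa \<Sigma> n A \<and> Q (trans A)" for A
    by (simp add: X_def XQ_def NFAs_def)
  have fin: "finite X" using finite_NFAs[OF fS, of n] by (rule finite_subset[rotated]) (auto simp: X_def XQ_def)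
  have CX: "C \<in> X" unfolding Xmem C_def using Qe by (auto intro: full_trim)
  have offle: "(\<Sum>z\<in>X-{x}. S_off \<Sigma> n r1 r2 r3 x z) \<le> r1 + r2 + r3" for x
  proof -
    have "card ((X-{x}) \<inter> ch_init x ` {1..n}) \<le> card (ch_init x ` {1..n})" by (rule card_mono) auto
    also have "\<dots> \<le> n" using card_image_le[of "{1..n}" "ch_init x"] by simp
    finally have "real (card ((X-{x}) \<inter> ch_init x ` {1..n})) \<le> real n" by simp
    then have "r1 / real n * real (card ((X-{x}) \<inter> ch_init x ` {1..n})) \<le> r1 / real n * real n"
      using r by (intro mult_left_mono) auto
    then have "r1 / real n * real (card ((X-{x}) \<inter> ch_init x ` {1..n})) \<le> r1" using n by simp
    then show ?thesis using off_sum_le[OF fS cS n r fin, of x] by linarith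
  qed
  have nonneg: "\<forall>x\<in>X. \<forall>y\<in>X. 0 \<le> P x y"
  proof (intro ballI)
    fix x y assume "x \<in> X" "y \<in> X"
    have "0 \<le> 1 - (\<Sum>z\<in>X-{x}. S_off \<Sigma> n r1 r2 r3 x z)" using offle[of x] rs by linarith
    moreover have "0 \<le> S_off \<Sigma> n r1 r2 r3 x y" using r by (intro S_off_nonneg) auto
    ultimately show "0 \<le> P x y" unfolding P_def S_mat_def by (cases "x = y") simp_all
  qed
  have sym: "\<forall>x\<in>X. \<forall>y\<in>X. P x y = P y x"
    unfolding P_def S_mat_def using S_off_sym by auto
  have rows: "\<forall>x\<in>X. (\<Sum>y\<in>X. P x y) = 1"
  proof
    fix x assume xX: "x \<in> X"
    have "(\<Sum>y\<in>X. P x y) = P x x + (\<Sum>y\<in>X-{x}. P x y)" using fin xX by (rule sum.remove)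
    also have "(\<Sum>y\<in>X-{x}. P x y) = (\<Sum>y\<in>X-{x}. S_off \<Sigma> n r1 r2 r3 x y)"
      unfolding P_def S_mat_def by (rule sum.cong) auto
    finally show "(\<Sum>y\<in>X. P x y) = 1" unfolding P_def S_mat_def by simp
  qed
  have noinit: "(X-{C}) \<inter> ch_init C ` {1..n} = {}"
  proof -
    have "ch_init C q \<notin> X" if "q \<in> {1..n}" for q
    proof
      assume "ch_init C q \<in> X"
      then have t: "trim_nfa \<Sigma> n (ch_init C q)" by (simp add: Xmem)
      have e: "edges (ch_init C q) = {}" by (simp add: edges_def ch_init_def C_def)
      show False using t that unfolding trim_nfa_def e by (auto simp: ch_init_def C_def)
    qed
    then show ?thesis by auto
  qed
  have loop: "P C C > 0"
  proof -
    have "(\<Sum>z\<in>X-{C}. S_off \<Sigma> n r1 r2 r3 C z) \<le> r2 + r3"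
      using off_sum_le[OF fS cS n r fin, of C] noinit by simp
    then show ?thesis unfolding P_def S_mat_def using rs r by simp
  qed
  have stepR: "(x,y) \<in> posrel X P" if "x \<in> X" "y \<in> X"
    "(\<exists>q\<in>{1..n}. y = ch_init x q) \<or> (\<exists>q\<in>{1..n}. y = ch_final x q)
         \<or> (\<exists>t\<in>{1..n} \<times> \<Sigma> \<times> {1..n}. y = ch_trans x t)" for x y
  proof -
    have "x \<noteq> y" using that(3) ch_init_ne ch_final_ne ch_trans_ne by metis
    then have "P x y = S_off \<Sigma> n r1 r2 r3 x y" by (simp add: P_def S_mat_def)
    also have "\<dots> > 0" by (rule S_off_pos[OF r n cS that(3)])
    finally show ?thesis using that by (simp add: posrel_def)
  qed
  have conn: "\<forall>x\<in>X. (x, C) \<in> (posrel X P)\<^sup>*"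
  proof
    fix A assume AX: "A \<in> X"
    then have tA: "trim_nfa \<Sigma> n A" and QA: "Q (trans A)" by (auto simp: Xmem)
    have subs: "init A \<subseteq> {1..n}" "final A \<subseteq> {1..n}" "trans A \<subseteq> {1..n} \<times> \<Sigma> \<times> {1..n}"
      using tA by (auto simp: trim_nfa_def)
    have ph1: "finite I \<Longrightarrow> I \<subseteq> {1..n} \<Longrightarrow> (A, A\<lparr>init := init A \<union> I\<rparr>) \<in> (posrel X P)\<^sup>*" for I
    proof (induction I rule: finite_induct)
      case empty then show ?case by simp
    next
      case (insert q I)
      define B where "B = A\<lparr>init := init A \<union> I\<rparr>"
      have IH: "(A, B) \<in> (posrel X P)\<^sup>*" using insert.IH insert.prems by (simp add: B_def)
      have BX: "B \<in> X" unfolding Xmem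
      proof
        show "trim_nfa \<Sigma> n B" by (rule mono_trim[OF tA]) (use insert.prems subs in \<open>auto simp: B_def\<close>)
        show "Q (trans B)" using QA by (simp add: B_def)
      qed
      have B'X: "A\<lparr>init := init A \<union> insert q I\<rparr> \<in> X" unfolding Xmem
      proof
        show "trim_nfa \<Sigma> n (A\<lparr>init := init A \<union> insert q I\<rparr>)" by (rule mono_trim[OF tA]) (use insert.prems subs in \<open>auto\<close>)
        show "Q (trans (A\<lparr>init := init A \<union> insert q I\<rparr>))" using QA by simp
      qed
      show ?case
      proof (cases "q \<in> init A")
        case True
        then have "A\<lparr>init := init A \<union> insert q I\<rparr> = B" by (simp add: B_def insert_absorb)
        then show ?thesis using IH by simp
      next
        case False
        then have "A\<lparr>init := init A \<union> insert q I\<rparr> = ch_init B q" using insert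
          by (simp add: B_def ch_init_def)
        moreover have qn: "q \<in> {1..n}" using insert.prems by auto
        ultimately have "(B, A\<lparr>init := init A \<union> insert q I\<rparr>) \<in> posrel X P"
          by (intro stepR[OF BX B'X]) blast
        then show ?thesis using IH by (rule rtrancl_into_rtrancl[rotated])
      qed
    qed
    define A1 where "A1 = A\<lparr>init := {1..n}\<rparr>"
    have r1: "(A, A1) \<in> (posrel X P)\<^sup>*" using ph1[of "{1..n}"] subs by (simp add: A1_def Un_absorb1)
    have tA1: "trim_nfa \<Sigma> n A1" "Q (trans A1)"
      unfolding A1_def by (rule mono_trim[OF tA]; use subs in auto) (use QA in simp)
    have ph2: "finite I \<Longrightarrow> I \<subseteq> {1..n} \<Longrightarrow> (A1, A1\<lparr>final := final A1 \<union> I\<rparr>) \<in> (posrel X P)\<^sup>*" for I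
    proof (induction I rule: finite_induct)
      case empty then show ?case by simp
    next
      case (insert q I)
      define B where "B = A1\<lparr>final := final A1 \<union> I\<rparr>"
      have IH: "(A1, B) \<in> (posrel X P)\<^sup>*" using insert.IH insert.prems by (simp add: B_def)
      have BX: "B \<in> X" unfolding Xmem
      proof
        show "trim_nfa \<Sigma> n B" by (rule mono_trim[OF tA1(1)]) (use insert.prems subs in \<open>auto simp: B_def A1_def\<close>)
        show "Q (trans B)" using tA1(2) by (simp add: B_def)
      qed
      have B'X: "A1\<lparr>final := final A1 \<union> insert q I\<rparr> \<in> X" unfolding Xmem
      proof
        show "trim_nfa \<Sigma> n (A1\<lparr>final := final A1 \<union> insert q I\<rparr>)" by (rule mono_trim[OF tA1(1)]) (use insert.prems subs in \<open>auto simp:  A1_def\<close>)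
        show "Q (trans (A1\<lparr>final := final A1 \<union> insert q I\<rparr>))" using tA1(2) by simp
      qed
      show ?case
      proof (cases "q \<in> final A1")
        case True
        then have "A1\<lparr>final := final A1 \<union> insert q I\<rparr> = B" by (simp add: B_def insert_absorb)
        then show ?thesis using IH by simp
      next
        case False
        then have "A1\<lparr>final := final A1 \<union> insert q I\<rparr> = ch_final B q" using insert
          by (simp add: B_def ch_final_def)
        moreover have qn: "q \<in> {1..n}" using insert.prems by auto
        ultimately have "(B, A1\<lparr>final := final A1 \<union> insert q I\<rparr>) \<in> posrel X P"
          by (intro stepR[OF BX B'X]) blast
        then show ?thesis using IH by (rule rtrancl_into_rtrancl[rotated])
      qed
    qed
    define A2 where "A2 = A1\<lparr>final := {1..n}\<rparr>"
    have r2: "(A1, A2) \<in> (posrel X P)\<^sup>*" using ph2[of "{1..n}"] subs by (simp add: A2_def A1_def Un_absorb1)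
    have A2i: "init A2 = {1..n}" "final A2 = {1..n}" "trans A2 = trans A"
      by (simp_all add: A2_def A1_def)
    have ph3: "finite T \<Longrightarrow> T \<subseteq> trans A2 \<Longrightarrow> (A2, A2\<lparr>trans := trans A2 - T\<rparr>) \<in> (posrel X P)\<^sup>*" for T
    proof (induction T rule: finite_induct)
      case empty then show ?case by simp
    next
      case (insert t T)
      define B where "B = A2\<lparr>trans := trans A2 - T\<rparr>"
      have inX: "A2\<lparr>trans := trans A2 - U\<rparr> \<in> X" for U
      proof -
        have "trans A2 - U \<subseteq> trans A" using A2i by auto
        then have "Q (trans A2 - U)" using down subs QA by blast
        moreover have "trim_nfa \<Sigma> n (A2\<lparr>trans := trans A2 - U\<rparr>)"
          by (rule full_trim) (use A2i subs in auto)
        ultimately show ?thesis by (simp add: Xmem)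
      qed
      have tB: "t \<in> trans B" using insert by (auto simp: B_def)
      have e1: "ch_trans B t = B\<lparr>trans := trans A2 - T - {t}\<rparr>" using tB
        by (simp add: ch_trans_def B_def)
      have e2: "trans A2 - insert t T = trans A2 - T - {t}" by blast
      have "A2\<lparr>trans := trans A2 - insert t T\<rparr> = ch_trans B t" unfolding e1 e2 by (simp add: B_def)
      moreover have "t \<in> {1..n} \<times> \<Sigma> \<times> {1..n}" using insert.prems subs(3) A2i(3) by blast
      ultimately have "(B, A2\<lparr>trans := trans A2 - insert t T\<rparr>) \<in> posrel X P"
        by (intro stepR[OF inX[of T, folded B_def] inX[of "insert t T"]]) blast
      moreover have "(A2, B) \<in> (posrel X P)\<^sup>*" using insert.IH insert.prems by (simp add: B_def)
      ultimately show ?case by (rule rtrancl_into_rtrancl[rotated])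
    qed
    have "finite (trans A2)" using A2i subs fS by (auto intro: finite_subset)
    then have r3: "(A2, A2\<lparr>trans := {}\<rparr>) \<in> (posrel X P)\<^sup>*" using ph3[of "trans A2"] by simp
    have "A2\<lparr>trans := {}\<rparr> = C" unfolding C_def using A2i by (cases A2) simp
    then show "(A, C) \<in> (posrel X P)\<^sup>*" using r1 r2 r3 by (meson rtrancl_trans)
  qed
  show ?thesis
    using generic_ergodic[OF fin CX nonneg sym rows loop conn] by (simp add: X_def P_def)
qed


theorem proposition1:
  fixes \<Sigma> :: "'a set" and m n :: nat and \<rho>1 \<rho>2 \<rho>3 :: real
  assumes "finite \<Sigma>" and "card \<Sigma> \<ge> 2"
    and "n \<ge> 1" and "m \<ge> 2"
    and "\<rho>1 > 0" and "\<rho>2 > 0" and "\<rho>3 > 0" and "\<rho>1 + \<rho>2 + \<rho>3 \<le> 1"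
  shows "ergodic_uniform (NFAs \<Sigma> n) (S_mat \<Sigma> n \<rho>1 \<rho>2 \<rho>3 (NFAs \<Sigma> n))
       \<and> ergodic_uniform (NFAs_m \<Sigma> m n) (S_mat \<Sigma> n \<rho>1 \<rho>2 \<rho>3 (NFAs_m \<Sigma> m n))
       \<and> ergodic_uniform (NFAs'_m \<Sigma> m n) (S_mat \<Sigma> n \<rho>1 \<rho>2 \<rho>3 (NFAs'_m \<Sigma> m n))"
proof -
  have cS: "card \<Sigma> > 0" using assms(2) by simp
  note E = nfa_ergodic[OF assms(1) cS assms(3) assms(5-8)]
  have e1: "NFAs \<Sigma> n = XQ \<Sigma> n (\<lambda>_. True)" by (simp add: XQ_def)
  have e2: "NFAs_m \<Sigma> m n = XQ \<Sigma> n (\<lambda>T. \<forall>p\<in>{1..n}. card {(a, q). (p, a, q) \<in> T} \<le> m)"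
    by (simp add: XQ_def NFAs_m_def)
  have e3: "NFAs'_m \<Sigma> m n = XQ \<Sigma> n (\<lambda>T. \<forall>p\<in>{1..n}. \<forall>a\<in>\<Sigma>. card {q. (p, a, q) \<in> T} \<le> m)"
    by (simp add: XQ_def NFAs'_m_def)
  have d2: "\<forall>T T'. T \<subseteq> {1..n} \<times> \<Sigma> \<times> {1..n} \<longrightarrow> T' \<subseteq> T \<longrightarrow>
      (\<forall>p\<in>{1..n}. card {(a, q). (p, a, q) \<in> T} \<le> m) \<longrightarrow> (\<forall>p\<in>{1..n}. card {(a, q). (p, a, q) \<in> T'} \<le> m)"
  proof (intro allI impI ballI)
    fix T T' p assume h: "T \<subseteq> {1..n} \<times> \<Sigma> \<times> {1..n}" "T' \<subseteq> T"
      "\<forall>p\<in>{1..n}. card {(a, q). (p, a, q) \<in> T} \<le> m" "p \<in> {1..n}"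
    have "finite (\<Sigma> \<times> {1..n})" using assms(1) by simp
    moreover have "{(a, q). (p, a, q) \<in> T} \<subseteq> \<Sigma> \<times> {1..n}" using h(1) by auto
    ultimately have f: "finite {(a, q). (p, a, q) \<in> T}" by (rule finite_subset[rotated])
    have "card {(a, q). (p, a, q) \<in> T'} \<le> card {(a, q). (p, a, q) \<in> T}"
      by (rule card_mono[OF f]) (use h(2) in auto)
    then show "card {(a, q). (p, a, q) \<in> T'} \<le> m" using h(3,4) by fastforce
  qed
  have d3: "\<forall>T T'. T \<subseteq> {1..n} \<times> \<Sigma> \<times> {1..n} \<longrightarrow> T' \<subseteq> T \<longrightarrow>
      (\<forall>p\<in>{1..n}. \<forall>a\<in>\<Sigma>. card {q. (p, a, q) \<in> T} \<le> m) \<longrightarrow> (\<forall>p\<in>{1..n}. \<forall>a\<in>\<Sigma>. card {q. (p, a, q) \<in> T'} \<le> m)"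
  proof (intro allI impI ballI)
    fix T T' p a assume h: "T \<subseteq> {1..n} \<times> \<Sigma> \<times> {1..n}" "T' \<subseteq> T"
      "\<forall>p\<in>{1..n}. \<forall>a\<in>\<Sigma>. card {q. (p, a, q) \<in> T} \<le> m" "p \<in> {1..n}" "a \<in> \<Sigma>"
    have f: "finite {q. (p, a, q) \<in> T}" by (rule finite_subset[of _ "{1..n}"]) (use h(1) in auto)
    have "card {q. (p, a, q) \<in> T'} \<le> card {q. (p, a, q) \<in> T}"
      by (rule card_mono[OF f]) (use h(2) in auto)
    then show "card {q. (p, a, q) \<in> T'} \<le> m" using h(3,4,5) by fastforce
  qed
  show ?thesis unfolding e1 e2 e3
    by (intro conjI E) (use d2 d3 in auto)
qed

end
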